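(* As $N\to\infty$, $$\min\Big\{\big\|\sqrt m-\sqrt n\big\| : 1\le m,n\le N,\ m\ne n,\ \sqrt m\notin\mathbb{Z},\ \sqrt n\notin\mathbb{Z}\Big\}\sim\frac{1}{2N^{3/2}}.$$
   Context: For $x\in\mathbb{R}$, $\|x\|=\min_{k\in\mathbb{Z}}|x-k|$ denotes the distance to the nearest integer. $f(N)\sim g(N)$ means $f(N)/g(N)\to1$. *)

theory Defs
  imports Complex_Main "HOL-Library.Landau_Symbols"
begin

definition dist_int :: "real \<Rightarrow> real" where
  "dist_int x = Inf (range (\<lambda>k::int. \<bar>x - of_int k\<bar>))"

definition min_gap :: "nat \<Rightarrow> real" where
  "min_gap N = Min {dist_int (sqrt (real m) - sqrt (real n)) | m n.
      1 \<le> m \<and> m \<le> N \<and> 1 \<le> n \<and> n \<le> N \<and> m \<noteq> n \<and>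
      sqrt (real m) \<notin> \<int> \<and> sqrt (real n) \<notin> \<int>}"

end

theory Submission
  imports Defs "HOL-Real_Asymp.Real_Asymp"
begin

definition gl :: "nat \<Rightarrow> real" where
  "gl N = 1/((2*sqrt (real N)+1)*(real N+7))"

definition gu :: "nat \<Rightarrow> real" where
  "gu N = 1/(2*(sqrt (real N - 2) - 2)^3)"

lemma sqrt_nat_int:
  fixes A k :: int and n :: nat
  assumes "k \<noteq> 0" "A^2 = 4*k^2*int n"
  shows "sqrt (real n) \<in> \<int>"
proof -
  have "(2*k)^2 dvd A^2" using assms(2) by (simp add: power_mult_distrib)
  hence "2*k dvd A" using pow_divides_pow_iff[where n=2 and a="2*k" and b=A] by (metis pos2)
  then obtain c where c: "A = 2*k*c" by blast
  have "4*k^2*c^2 = 4*k^2*int n" using assms(2) c by (simp add: power_mult_distrib)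
  hence "c^2 = int n" using assms(1) by simp
  hence "real n = (real_of_int \<bar>c\<bar>)^2"
    by (metis of_int_eq_iff of_int_of_nat_eq of_int_power power2_abs)
  hence "sqrt (real n) = real_of_int \<bar>c\<bar>" by simp
  thus ?thesis by simp
qed

lemma lb:
  fixes m n N :: nat and k :: int
  assumes mN: "m \<le> N" and nm: "n < m" and n1: "1 \<le> n" and ns: "sqrt (real n) \<notin> \<int>"
  shows "\<bar>sqrt m - sqrt n - of_int k\<bar> \<ge> gl N"
proof -
  define s where "s = sqrt (real m)"
  define t where "t = sqrt (real n)"
  have N1: "real N \<ge> 1" using mN nm by linarith
  have s2: "s^2 = m" unfolding s_def by simp
  have t2: "t^2 = n" unfolding t_def by simp
  have t0: "t \<ge> 1" unfolding t_def using n1 by simp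
  have ts: "t < s" unfolding s_def t_def using nm by simp
  have sN: "s \<le> sqrt N" unfolding s_def using mN by simp
  have sqN1: "sqrt N \<ge> 1" using N1 by simp
  have sqNN: "sqrt N \<le> N"
  proof -
    have "sqrt N * 1 \<le> sqrt N * sqrt N" using sqN1 by (intro mult_left_mono) auto
    thus ?thesis using N1 by simp
  qed
  have two2: "1 \<le> 2*sqrt N" using sqN1 by linarith
  have glpos: "gl N > 0" unfolding gl_def using N1 by (simp add: add_pos_pos)
  have gl1: "gl N \<le> 1/(2*sqrt N)"
    unfolding gl_def using N1 sqN1 sqNN two2 by (intro divide_left_mono) (auto intro!: mult_mono simp: add_pos_pos)
  have gl2: "gl N \<le> 1/N"
  proof -
    have "real N+7 \<le> (2*sqrt (real N)+1)*(real N+7)"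
      using mult_right_mono[of 1 "2*sqrt (real N)+1" "real N + 7"] sqN1 by simp
    hence "real N \<le> (2*sqrt (real N)+1)*(real N+7)" by linarith
    thus ?thesis unfolding gl_def using N1 by (intro divide_left_mono) auto
  qed
  show ?thesis
  proof (cases "k \<le> 0")
    case True
    have "s - t = (m - n)/(s+t)"
      using s2 t2 ts t0 nm by (simp add: field_simps power2_eq_square of_nat_diff)
    also have "\<dots> \<ge> 1/(s+t)" using nm ts t0 by (intro divide_right_mono) auto
    finally have "s - t \<ge> 1/(2*sqrt N)"
      using ts sN t0 by (smt (verit) frac_le)
    thus ?thesis using True gl1 unfolding s_def t_def by simp
  next
    case False
    hence k1: "k \<ge> 1" by simp
    define d where "d = s - t - k"
    show ?thesis
    proof (cases "\<bar>d\<bar> \<ge> 1/N")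
      case True thus ?thesis using gl2 unfolding d_def s_def t_def by simp
    next
      case False
      hence dN: "\<bar>d\<bar> < 1/N" by simp
      hence d1: "\<bar>d\<bar> \<le> 1" using N1
        by (smt (verit) divide_le_eq_1)
      define A :: int where "A = int m - int n - k^2"
      have id: "A - 2*k*t = d*(s+t+k)"
        unfolding A_def d_def using s2 t2 by (simp add: algebra_simps power2_eq_square)
      have "A^2 \<noteq> 4*k^2*int n" using sqrt_nat_int[of k A n] k1 ns unfolding t_def by auto
      hence "\<bar>A^2 - 4*k^2*int n\<bar> \<ge> 1" by linarith
      hence ge1: "\<bar>real_of_int (A^2 - 4*k^2*int n)\<bar> \<ge> 1"
        by (metis of_int_abs of_int_1_le_iff)
      have "real_of_int (A^2 - 4*k^2*int n) = (A - 2*k*t)*(A + 2*k*t)"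
        using t2 by (simp add: algebra_simps power2_eq_square)
      also have "\<dots> = d*(s+t+k)*(d*(s+t+k) + 4*k*t)" using id by (simp add: algebra_simps)
      finally have e1: "1 \<le> \<bar>d\<bar>*(s+t+k)*\<bar>d*(s+t+k) + 4*k*t\<bar>"
        using ge1 k1 t0 ts by (simp add: abs_mult)
      have stk: "s+t+k = 2*s - d" unfolding d_def by simp
      have B1: "s+t+k \<le> 2*sqrt N + 1" using stk sN d1 by linarith
      have stk0: "s+t+k \<ge> 0" using k1 t0 ts by simp
      have sq: "(s-2*t)^2 = s^2 - 4*(s-t)*t" by (simp add: power2_eq_square algebra_simps)
      have "4*(s-t)*t \<le> s^2" using sq zero_le_power2[of "s-2*t"] by linarith
      hence "4*(s-t)*t \<le> N" using s2 mN by simp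
      moreover have "4*(-d)*t \<le> 4" 
      proof -
        have "-d*t \<le> \<bar>d\<bar>*t" using t0 mult_right_mono[of "-d" "\<bar>d\<bar>" t] by simp
        also have "\<dots> \<le> (1/N)*sqrt N" using dN t0 ts sN by (intro mult_mono) auto
        also have "\<dots> \<le> 1"
          using N1 by (simp add: divide_simps sqNN)
        finally show ?thesis by simp
      qed
      ultimately have k4: "4*k*t \<le> N + 4" unfolding d_def by (simp add: algebra_simps)
      have "\<bar>d\<bar>*(s+t+k) \<le> (1/N)*(2*sqrt N+1)" using dN B1 stk0 by (intro mult_mono) auto
      also have "\<dots> \<le> 3" using N1 sqNN by (simp add: divide_simps)
      finally have "\<bar>d*(s+t+k)\<bar> \<le> 3" using stk0 by (simp add: abs_mult)
      moreover have "4*k*t \<ge> 0" using k1 t0 by simp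
      ultimately have B2: "\<bar>d*(s+t+k) + 4*k*t\<bar> \<le> N + 7" using k4 by (simp only: abs_le_iff) linarith
      have "1 \<le> \<bar>d\<bar>*((s+t+k)*\<bar>d*(s+t+k) + 4*k*t\<bar>)" using e1 by (simp add: mult.assoc)
      also have "\<dots> \<le> \<bar>d\<bar>*((2*sqrt N + 1)*(N+7))"
        using B1 B2 stk0 by (intro mult_left_mono mult_mono) auto
      finally have "gl N \<le> \<bar>d\<bar>" unfolding gl_def using N1 sqN1
        by (simp add: divide_simps mult.commute add_pos_pos)
      thus ?thesis unfolding d_def s_def t_def by simp
    qed
  qed
qed


lemma not_sq:
  fixes a n :: nat
  assumes "a^2 < n" "n < (a+1)^2"
  shows "sqrt (real n) \<notin> \<int>"
proof
  assume "sqrt (real n) \<in> \<int>"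
  then obtain z where z: "sqrt (real n) = of_int z" by (auto elim: Ints_cases)
  have r1: "(real a)^2 < real n" using assms(1) by (simp flip: of_nat_power)
  have r2: "real n < (real a + 1)^2" using assms(2)
    by (metis of_nat_1 of_nat_add of_nat_less_iff of_nat_power)
  have "real a < sqrt (real n)" using r1 by (rule real_less_rsqrt)
  moreover have "sqrt ((real a+1)^2) = real a + 1" by simp
  hence "sqrt (real n) < real a + 1" using real_sqrt_less_mono[OF r2] by linarith
  ultimately have "int a < z" "z < int a + 1" using z by linarith+
  thus False by linarith
qed

lemma ub_pair:
  fixes a :: nat
  assumes a1: "a \<ge> 1"
  shows "\<bar>sqrt (real (4*a^2+2)) - sqrt (real (a^2+1)) - real a\<bar> \<le> 1/(16*real a^3)"
proof -
  define p where "p = sqrt (real (4*a^2+2))"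
  define q where "q = sqrt (real (a^2+1))"
  have p2: "p^2 = 4*a^2+2" unfolding p_def by simp
  have q2: "q^2 = a^2+1" unfolding q_def by simp
  have pa: "p \<ge> 2*a" unfolding p_def by (rule real_le_rsqrt) (simp add: power_mult_distrib)
  have qa: "q \<ge> a" unfolding q_def by (rule real_le_rsqrt) simp
  have ra: "real a \<ge> 1" using a1 by simp
  define D where "D = p + a + q"
  define E where "E = 2*a^2 + 1 + 2*a*q"
  have D4: "D \<ge> 4*real a" unfolding D_def using pa qa by simp
  have "2*real a*real a \<le> 2*real a*q" using qa ra by (intro mult_left_mono) auto
  hence E4: "E \<ge> 4*real a^2" unfolding E_def by (simp add: power2_eq_square)
  have h1: "(p - a - q)*D = 2*a^2 + 1 - 2*a*q"
    unfolding D_def using p2 q2 by (simp add: algebra_simps power2_eq_square)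
  have h2: "(2*a^2 + 1 - 2*a*q)*E = 1"
  proof -
    have "(2*a^2 + 1 - 2*a*q)*E = (2*real a^2+1)^2 - 4*real a^2*q^2"
      unfolding E_def by (simp add: algebra_simps power2_eq_square)
    also have "\<dots> = (2*real a^2+1)^2 - 4*real a^2*(real a^2+1)" using q2 by simp
    also have "\<dots> = 1" by (simp add: algebra_simps power2_eq_square)
    finally show ?thesis .
  qed
  have Dp: "D > 0" using D4 ra by simp
  have "0 < 4*real a^2" using ra by simp
  hence Ep: "E > 0" using E4 by linarith
  have "(p - a - q)*(D*E) = 1" using h1 h2 by (simp add: mult.assoc[symmetric])
  hence eq: "p - a - q = 1/(D*E)" using Dp Ep by (simp add: field_simps)
  have "4*real a*(4*real a^2) \<le> D*E" using D4 E4 ra by (intro mult_mono) auto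
  hence "16*real a^3 \<le> D*E" by (simp add: power2_eq_square power3_eq_cube)
  hence "1/(D*E) \<le> 1/(16*real a^3)" using ra by (intro divide_left_mono) (auto simp: Dp Ep)
  moreover have "1/(D*E) > 0" using Dp Ep by simp
  moreover have "p - q - real a = 1/(D*E)" using eq by simp
  ultimately have "\<bar>p - q - real a\<bar> \<le> 1/(16*real a^3)" by simp
  thus ?thesis unfolding p_def q_def .
qed

lemma dist_int_ge:
  assumes "\<And>k. g \<le> \<bar>x - of_int k\<bar>"
  shows "g \<le> dist_int x"
  unfolding dist_int_def by (rule cInf_greatest) (auto intro: assms)

lemma dist_int_le: "dist_int x \<le> \<bar>x - of_int k\<bar>"
  unfolding dist_int_def by (rule cInf_lower) (auto intro: bdd_belowI[where m=0])


lemma bounds: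
  fixes N :: nat
  assumes N7: "N \<ge> 7"
  shows "gl N \<le> min_gap N \<and> min_gap N \<le> gu N"
proof -
  define S where "S = {dist_int (sqrt (real m) - sqrt (real n)) | m n.
      1 \<le> m \<and> m \<le> N \<and> 1 \<le> n \<and> n \<le> N \<and> m \<noteq> n \<and>
      sqrt (real m) \<notin> \<int> \<and> sqrt (real n) \<notin> \<int>}"
  have mg: "min_gap N = Min S" unfolding min_gap_def S_def by simp
  have fin: "finite S"
  proof -
    have "S \<subseteq> (\<lambda>(m,n). dist_int (sqrt (real m) - sqrt (real n))) ` ({1..N} \<times> {1..N})"
      unfolding S_def by auto
    thus ?thesis by (rule finite_subset) auto
  qed
  have low: "gl N \<le> y" if "y \<in> S" for y
  proof -
    obtain m n where mn: "y = dist_int (sqrt (real m) - sqrt (real n))" "1 \<le> m" "m \<le> N"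
      "1 \<le> n" "n \<le> N" "m \<noteq> n" "sqrt (real m) \<notin> \<int>" "sqrt (real n) \<notin> \<int>"
      using \<open>y \<in> S\<close> unfolding S_def by blast
    show ?thesis unfolding mn(1)
    proof (rule dist_int_ge)
      fix k :: int
      show "gl N \<le> \<bar>sqrt (real m) - sqrt (real n) - of_int k\<bar>"
      proof (cases "n < m")
        case True thus ?thesis using lb[of m N n k] mn by simp
      next
        case False
        hence "m < n" using mn(6) by simp
        hence "gl N \<le> \<bar>sqrt (real n) - sqrt (real m) - of_int (-k)\<bar>"
          using lb[of n N m "-k"] mn by simp
        also have "\<dots> = \<bar>sqrt (real m) - sqrt (real n) - of_int k\<bar>" by simp
        finally show ?thesis .
      qed
    qed
  qed
  define r where "r = sqrt (real N - 2)"
  have r5: "r \<ge> sqrt 5" unfolding r_def using N7 by simp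
  have s5: "sqrt 5 > (2::real)" by (simp add: real_less_rsqrt)
  define a where "a = nat \<lfloor>r/2\<rfloor>"
  have "r/2 \<ge> 1" using r5 s5 by simp
  hence fl1: "1 \<le> \<lfloor>r/2\<rfloor>" by (simp add: le_floor_iff)
  have ra: "real a = of_int \<lfloor>r/2\<rfloor>" unfolding a_def using fl1 by simp
  have ar1: "real a \<le> r/2" using ra of_int_floor_le[of "r/2"] by linarith
  have ar2: "real a > r/2 - 1" using ra real_of_int_floor_gt_diff_one[of "r/2"] by linarith
  have "(1::real) \<le> of_int \<lfloor>r/2\<rfloor>" using fl1 by (simp only: of_int_1_le_iff)
  hence "real a \<ge> 1" using ra by linarith
  hence a1: "a \<ge> 1" by simp
  have "(2*real a)^2 \<le> r^2" using ar1 a1 by (intro power_mono) auto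
  hence "4*real a^2 \<le> real N - 2" unfolding r_def using N7 by (simp add: power_mult_distrib)
  hence aN: "4*a^2+2 \<le> N" by (simp flip: of_nat_power)
  have ns1: "sqrt (real (a^2+1)) \<notin> \<int>"
    by (rule not_sq[of a]) (use a1 in \<open>auto simp: power2_eq_square\<close>)
  have ns2: "sqrt (real (4*a^2+2)) \<notin> \<int>"
    by (rule not_sq[of "2*a"]) (use a1 in \<open>auto simp: power2_eq_square\<close>)
  have ne: "4*a^2+2 \<noteq> a^2+1" using a1 by simp
  define y where "y = dist_int (sqrt (real (4*a^2+2)) - sqrt (real (a^2+1)))"
  have yS: "y \<in> S" unfolding S_def y_def
    using aN ns1 ns2 ne a1 by (intro CollectI exI[of _ "4*a^2+2"] exI[of _ "a^2+1"]) auto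
  have "y \<le> 1/(16*real a^3)"
    unfolding y_def using dist_int_le[of _ "int a"] ub_pair[OF a1] by (metis of_int_of_nat_eq order.trans)
  also have "\<dots> \<le> gu N"
  proof -
    have x0: "r - 2 > 0" using r5 s5 by simp
    have "(r - 2)^3 \<le> (2*real a)^3" using ar2 x0 by (intro power_mono) auto
    moreover have "(2*real a)^3 = 8*real a^3" by (simp add: power_mult_distrib)
    ultimately have "2*(r-2)^3 \<le> 16*real a^3" by linarith
    moreover have "0 < 2*(r-2)^3" using x0 by simp
    moreover have "0 < real a^3" using a1 by simp
    ultimately show ?thesis unfolding gu_def r_def[symmetric] using x0
      by (intro divide_left_mono) (auto intro!: mult_pos_pos)
  qed
  finally have yu: "y \<le> gu N" .
  have Sne: "S \<noteq> {}" using yS by auto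
  have "gl N \<le> Min S" using fin Sne low by (simp add: Min_ge_iff)
  moreover have "Min S \<le> gu N" using Min_le[OF fin yS] yu by linarith
  ultimately show ?thesis using mg by simp
qed

theorem theorem7:
  shows "min_gap \<sim>[at_top] (\<lambda>N. 1 / (2 * real N powr (3/2)))"
proof (rule asymp_equivI')
  define h where "h = (\<lambda>N::nat. 1 / (2 * real N powr (3/2)))"
  have L: "((\<lambda>N. gl N / h N) \<longlongrightarrow> 1) at_top"
    unfolding gl_def h_def by real_asymp
  have U: "((\<lambda>N. gu N / h N) \<longlongrightarrow> 1) at_top"
    unfolding gu_def h_def by real_asymp
  have ev: "eventually (\<lambda>N. gl N / h N \<le> min_gap N / h N \<and> min_gap N / h N \<le> gu N / h N) at_top"
    using eventually_ge_at_top[of "7::nat"]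
  proof eventually_elim
    case (elim N)
    have "h N > 0" unfolding h_def using elim by simp
    thus ?case using bounds[OF elim] by (auto intro: divide_right_mono)
  qed
  have "((\<lambda>N. min_gap N / h N) \<longlongrightarrow> 1) at_top"
    by (rule tendsto_sandwich[OF _ _ L U]) (use ev in \<open>auto elim: eventually_mono\<close>)
  thus "((\<lambda>N. min_gap N / (1 / (2 * real N powr (3/2)))) \<longlongrightarrow> 1) at_top"
    unfolding h_def .
qed

end
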